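(* Let $X,Y$ be metric spaces, $X\times Y$ with the maximum metric, $\Delta$ a scale and $g,h$ Hausdorff functions. If $E\subseteq X\times Y$ is compact, then the mapping $x\mapsto\underline{\mathcal B}^g_0(E_x)$ is Borel measurable on $X$ and $$\mathcal P^{gh}_{\Delta,0}(E)\ge\int\underline{\mathcal B}^{g}_0(E_x)\,d\mathcal P^{h}_{\Delta}(x).$$
   Context: In a metric space $(X,d)$: $\operatorname{gap}F=\inf\{d(x,y):x,y\in F,x\neq y\}$, $C_\delta(E)=\sup\{|F|:F\subseteq E,\operatorname{gap}F>\delta\}$. A Hausdorff function is a nondecreasing $g:(0,\infty)\to(0,\infty)$ (no continuity assumed); $gh$ is the pointwise product. A scale is a set $\Delta\subseteq(0,\infty)$ with $0$ in its closure. A packing is a family $\pi=\{(x_i,r_i):i\in I\}\subseteq X\times(0,\infty)$ with $d(x_i,x_j)>r_i$ for $i\ne j$; it is a packing of $E$ if all $x_i\in E$, $\Delta$-valued if all $r_i\in\Delta$, $\delta$-fine if all $r_i\le\delta$; $g(\pi)=\sum_ig(r_i)$. $\mathcal P^g_{\Delta,0}(E)=\inf_{\delta>0}\sup\{g(\pi):\pi$ a $\Delta$-valued $\delta$-fine packing of $E\}$; $\mathcal P^g_\Delta(E)=\inf\{\sum_n\mathcal P^g_{\Delta,0}(E_n):E\subseteq\bigcup_nE_n\}$ (countable covers), a Borel measure when restricted to Borel sets; $\underline{\mathcal B}^g_0(E)=\liminf_{\delta\to0}C_\delta(E)g(\delta)$. $E_x=\{y\in Y:(x,y)\in E\}$.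 *)

theory Defs
  imports "HOL-Analysis.Analysis"
begin

text \<open>All notions are parametrised by a distance function d, so that the
same definitions serve for X, Y (with their metric dist) and for X \<times> Y
with the maximum metric.\<close>

definition hausdorff_function :: "(real \<Rightarrow> real) \<Rightarrow> bool" where
  "hausdorff_function g \<longleftrightarrow> mono_on {0<..} g \<and> (\<forall>r>0. g r > 0)"

definition scale :: "real set \<Rightarrow> bool" where
  "scale \<Delta> \<longleftrightarrow> \<Delta> \<subseteq> {0<..} \<and> 0 \<in> closure \<Delta>"

definition max_dist :: "('a::metric_space \<times> 'b::metric_space) \<Rightarrow> ('a \<times> 'b) \<Rightarrow> real" where
  "max_dist p q = max (dist (fst p) (fst q)) (dist (snd p) (snd q))"

text \<open>gap F = inf of distances of distinct points (inf of empty set = \<infinity>).\<close>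
definition gap :: "('x \<Rightarrow> 'x \<Rightarrow> real) \<Rightarrow> 'x set \<Rightarrow> ennreal" where
  "gap d F = (INF p \<in> {(x, y). x \<in> F \<and> y \<in> F \<and> x \<noteq> y}. ennreal (d (fst p) (snd p)))"

definition cap :: "('x \<Rightarrow> 'x \<Rightarrow> real) \<Rightarrow> real \<Rightarrow> 'x set \<Rightarrow> ennreal" where
  "cap d \<delta> E = (SUP F \<in> {F. F \<subseteq> E \<and> gap d F > ennreal \<delta>}.
                   (if finite F then of_nat (card F) else top))"

definition lower_box0 :: "('x \<Rightarrow> 'x \<Rightarrow> real) \<Rightarrow> (real \<Rightarrow> real) \<Rightarrow> 'x set \<Rightarrow> ennreal" where
  "lower_box0 d g E = Liminf (at_right 0) (\<lambda>\<delta>. cap d \<delta> E * ennreal (g \<delta>))"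

text \<open>A packing, as a set of pairs (x_i, r_i) (the centres of a packing are
necessarily distinct, so an indexed family is the same as its set of pairs).\<close>
definition packing :: "('x \<Rightarrow> 'x \<Rightarrow> real) \<Rightarrow> ('x \<times> real) set \<Rightarrow> bool" where
  "packing d \<pi> \<longleftrightarrow> (\<forall>p\<in>\<pi>. snd p > 0) \<and>
     (\<forall>p\<in>\<pi>. \<forall>q\<in>\<pi>. p \<noteq> q \<longrightarrow> d (fst p) (fst q) > snd p)"

definition fine_packing_of ::
  "('x \<Rightarrow> 'x \<Rightarrow> real) \<Rightarrow> real set \<Rightarrow> real \<Rightarrow> 'x set \<Rightarrow> ('x \<times> real) set \<Rightarrow> bool" where
  "fine_packing_of d \<Delta> \<delta> E \<pi> \<longleftrightarrow> packing d \<pi> \<and> fst ` \<pi> \<subseteq> E \<and> snd ` \<pi> \<subseteq> \<Delta> \<and>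
     (\<forall>p\<in>\<pi>. snd p \<le> \<delta>)"

definition gsum :: "(real \<Rightarrow> real) \<Rightarrow> ('x \<times> real) set \<Rightarrow> ennreal" where
  "gsum g \<pi> = (SUP F \<in> {F. finite F \<and> F \<subseteq> \<pi>}. \<Sum>p\<in>F. ennreal (g (snd p)))"

definition pre_packing :: "('x \<Rightarrow> 'x \<Rightarrow> real) \<Rightarrow> real set \<Rightarrow> (real \<Rightarrow> real) \<Rightarrow> 'x set \<Rightarrow> ennreal" where
  "pre_packing d \<Delta> g E =
     (INF \<delta> \<in> {0<..}. SUP \<pi> \<in> {\<pi>. fine_packing_of d \<Delta> \<delta> E \<pi>}. gsum g \<pi>)"

definition packing_outer :: "('x \<Rightarrow> 'x \<Rightarrow> real) \<Rightarrow> real set \<Rightarrow> (real \<Rightarrow> real) \<Rightarrow> 'x set \<Rightarrow> ennreal" where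
  "packing_outer d \<Delta> g E =
     (INF En \<in> {En :: nat \<Rightarrow> 'x set. E \<subseteq> (\<Union>n. En n)}. \<Sum>n. pre_packing d \<Delta> g (En n))"

definition packing_measure :: "real set \<Rightarrow> (real \<Rightarrow> real) \<Rightarrow> 'a::metric_space measure" where
  "packing_measure \<Delta> g = measure_of UNIV (sets borel) (packing_outer dist \<Delta> g)"

end

theory Submission
  imports Defs
begin

lemma metric_caratheodory:
  fixes \<mu> :: "'a::metric_space set \<Rightarrow> ennreal"
  assumes mono: "\<And>A B. A \<subseteq> B \<Longrightarrow> \<mu> A \<le> \<mu> B"
   and empty: "\<mu> {} = 0"
   and csub: "\<And>A. \<mu> (\<Union>i. A i) \<le> (\<Sum>i. \<mu> (A i))"
   and sep: "\<And>A B e. e > 0 \<Longrightarrow> (\<forall>a\<in>A. \<forall>b\<in>B. e \<le> dist a b) \<Longrightarrow> \<mu> A + \<mu> B \<le> \<mu> (A \<union> B)"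
   and cl: "closed F"
  shows "\<mu> (T \<inter> F) + \<mu> (T - F) \<le> \<mu> T"
proof (cases "F = {} \<or> \<mu> T = top")
  case True
  then show ?thesis using empty by auto
next
  case False
  then have Fne: "F \<noteq> {}" and fin: "\<mu> T < top" by (auto simp: top.not_eq_extremum)
  define d where "d x = infdist x F" for x
  have dpos: "d x > 0" if "x \<notin> F" for x
    using that in_closed_iff_infdist_zero[OF cl Fne] infdist_nonneg[of x F] unfolding d_def by force
  define Tn where "Tn n = {x \<in> T - F. 1 / real (Suc n) \<le> d x}" for n
  define R where "R k = {x \<in> T - F. 1 / real (k+2) \<le> d x \<and> d x < 1 / real (Suc k)}" for k
  have sepT: "\<mu> (T \<inter> F) + \<mu> (Tn n) \<le> \<mu> T" for n
  proof -
    have "\<mu> (T \<inter> F) + \<mu> (Tn n) \<le> \<mu> ((T \<inter> F) \<union> Tn n)"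
    proof (rule sep[of "1 / real (Suc n)"])
      show "\<forall>a\<in>T \<inter> F. \<forall>b\<in>Tn n. 1 / real (Suc n) \<le> dist a b"
      proof (intro ballI)
        fix a b assume "a \<in> T \<inter> F" "b \<in> Tn n"
        then have "d b \<le> dist b a" unfolding d_def by (auto intro: infdist_le)
        then show "1 / real (Suc n) \<le> dist a b" using \<open>b \<in> Tn n\<close> by (auto simp: Tn_def dist_commute)
      qed
    qed simp
    also have "\<dots> \<le> \<mu> T" by (rule mono) (auto simp: Tn_def)
    finally show ?thesis .
  qed
  have dtri: "d y \<le> d x + dist x y" for x y
    unfolding d_def using infdist_triangle[of y F x] by (simp add: dist_commute)
  have par: "(\<Sum>k<N. \<mu> (R (2*k+j))) \<le> \<mu> (\<Union>k<N. R (2*k+j))" for N j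
  proof (induction N)
    case 0 then show ?case by simp
  next
    case (Suc N)
    have "(\<Sum>k<Suc N. \<mu> (R (2*k+j))) = (\<Sum>k<N. \<mu> (R (2*k+j))) + \<mu> (R (2*N+j))" by simp
    also have "\<dots> \<le> \<mu> (\<Union>k<N. R (2*k+j)) + \<mu> (R (2*N+j))" using Suc by (auto intro: add_right_mono)
    also have "\<dots> \<le> \<mu> ((\<Union>k<N. R (2*k+j)) \<union> R (2*N+j))"
    proof (cases N)
      case 0 then show ?thesis using empty by simp
    next
      case (Suc M)
      have pos: "1 / real (2*N+j) - 1 / real (Suc (2*N+j)) > 0" using Suc by (simp add: frac_less2)
      show ?thesis
      proof (rule sep[OF pos], intro ballI)
        fix a b assume a: "a \<in> (\<Union>k<N. R (2*k+j))" and b: "b \<in> R (2*N+j)"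
        then obtain k where k: "k < N" "a \<in> R (2*k+j)" by auto
        have "1 / real (2*N+j) \<le> 1 / real (2*k+j+2)" using k Suc by (intro divide_left_mono) auto
        also have "\<dots> \<le> d a" using k by (auto simp: R_def)
        finally have "1 / real (2*N+j) \<le> d a" .
        moreover have "d b < 1 / real (Suc (2*N+j))" using b by (auto simp: R_def)
        moreover have "d a \<le> d b + dist b a" by (rule dtri)
        ultimately show "1 / real (2*N+j) - 1 / real (Suc (2*N+j)) \<le> dist a b"
          by (simp add: dist_commute)
      qed
    qed
    finally show ?case by (simp add: lessThan_Suc Un_commute)
  qed
  have parT: "(\<Sum>k<N. \<mu> (R (2*k+j))) \<le> \<mu> T" for N j
    using par[where N=N and j=j] mono[of "\<Union>k<N. R (2*k+j)" T] by (force simp: R_def)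
  have sumR: "(\<Sum>k. \<mu> (R k)) \<le> 2 * \<mu> T"
  proof (rule suminf_le_const[OF summableI])
    fix n
    have "(\<Sum>k<n. \<mu> (R k)) \<le> (\<Sum>k<2*n. \<mu> (R k))" by (intro sum_mono2) auto
    also have "\<dots> = (\<Sum>k<n. \<mu> (R (2*k))) + (\<Sum>k<n. \<mu> (R (2*k+1)))"
    proof (induction n)
      case (Suc n) then show ?case by (simp add: algebra_simps lessThan_Suc add.assoc add.left_commute)
    qed simp
    also have "\<dots> \<le> \<mu> T + \<mu> T" using parT[where N=n and j=0] parT[where N=n and j=1] by (auto intro: add_mono)
    finally show "(\<Sum>k<n. \<mu> (R k)) \<le> 2 * \<mu> T" by (simp add: mult_2)
  qed
  then have sumfin: "(\<Sum>k. \<mu> (R k)) < top" using fin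
  proof -
    have "2 * \<mu> T < top" using fin by (simp add: ennreal_mult_less_top)
    then show ?thesis using sumR by (rule le_less_trans[rotated])
  qed
  define a where "a k = \<mu> (R k)" for k
  have tail: "\<exists>n. (\<Sum>k. \<mu> (R (k+n))) < ennreal e" if e: "e > 0" for e
  proof -
    define b where "b k = enn2real (a k)" for k
    have afin: "a k < top" for k
      using sumfin ennreal_suminf_lessD[of a top k] unfolding a_def by simp
    have ab: "a k = ennreal (b k)" for k using afin[of k] by (simp add: b_def less_top)
    have bnn: "b k \<ge> 0" for k by (simp add: b_def)
    have "(\<Sum>k. ennreal (b k)) \<noteq> top" using sumfin ab unfolding a_def by (simp add: less_top)
    then have sb: "summable b" using bnn summable_suminf_not_top by metis
    obtain N where N: "\<forall>n\<ge>N. norm (\<Sum>i. b (i + n)) < e" using suminf_exist_split[OF e sb] by blast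
    have sbN: "summable (\<lambda>i. b (i + N))" using sb by (simp add: summable_iff_shift)
    have "(\<Sum>k. \<mu> (R (k+N))) = ennreal (\<Sum>i. b (i + N))"
    proof -
      have "(\<Sum>k. \<mu> (R (k+N))) = (\<Sum>k. ennreal (b (k+N)))"
        using ab unfolding a_def by presburger
      also have "\<dots> = ennreal (\<Sum>i. b (i + N))"
        using suminf_ennreal2[of "\<lambda>i. b (i+N)", OF _ sbN] bnn by blast
      finally show ?thesis .
    qed
    also have "\<dots> < ennreal e"
    proof (rule ennreal_lessI[OF e])
      have "norm (\<Sum>i. b (i + N)) < e" using N by blast
      then show "(\<Sum>i. b (i + N)) < e" by (simp add: abs_less_iff)
    qed
    finally show ?thesis by (rule exI)
  qed
  have cover: "\<mu> (T - F) \<le> \<mu> (Tn n) + (\<Sum>k. \<mu> (R (k+n)))" for n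
  proof -
    define B where "B i = (case i of 0 \<Rightarrow> Tn n | Suc k \<Rightarrow> R (k+n))" for i
    have "T - F \<subseteq> (\<Union>i. B i)"
    proof
      fix x assume x: "x \<in> T - F"
      show "x \<in> (\<Union>i. B i)"
      proof (cases "1 / real (Suc n) \<le> d x")
        case True then show ?thesis using x by (auto simp: B_def Tn_def intro!: exI[of _ 0])
      next
        case False
        have "\<exists>m. 1 / real (Suc m) \<le> d x"
          using ex_inverse_of_nat_less[OF dpos[of x]] x
          by (metis Suc_pred inverse_eq_divide less_imp_le DiffD2)
        define m where "m = (LEAST m. 1 / real (Suc m) \<le> d x)"
        have m1: "1 / real (Suc m) \<le> d x" unfolding m_def by (rule LeastI_ex) fact
        have mn: "m > n"
        proof (rule ccontr)
          assume "\<not> n < m"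
          then have "1 / real (Suc n) \<le> 1 / real (Suc m)" by (intro divide_left_mono) auto
          with m1 False show False by simp
        qed
        have m2: "\<not> 1 / real (Suc (m-1)) \<le> d x"
        proof -
          have "m - 1 < (LEAST m. 1 / real (Suc m) \<le> d x)" using mn unfolding m_def[symmetric] by simp
          then show ?thesis by (rule not_less_Least)
        qed
        obtain k where k: "m = Suc (n + k)" using less_imp_Suc_add[OF mn] by blast
        have "x \<in> R (k + n)" using m1 m2 x unfolding R_def k
          by (simp add: add.commute not_le)
        then have "x \<in> B (Suc k)" by (simp add: B_def)
        then show ?thesis by blast
      qed
    qed
    then have "\<mu> (T - F) \<le> \<mu> (\<Union>i. B i)" by (rule mono)
    also have "\<dots> \<le> (\<Sum>i. \<mu> (B i))" by (rule csub)
    also have "\<dots> = (\<Sum>j. \<mu> (B (j+1))) + (\<Sum>j<1. \<mu> (B j))"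
      by (rule suminf_offset) (rule summableI)
    also have "\<dots> = \<mu> (Tn n) + (\<Sum>k. \<mu> (R (k+n)))" by (simp add: B_def add.commute)
    finally show ?thesis .
  qed
  show ?thesis
  proof (rule ennreal_le_epsilon)
    fix e :: real assume e: "0 < e"
    obtain n where n: "(\<Sum>k. \<mu> (R (k+n))) < ennreal e" using tail[OF e] by blast
    have "\<mu> (T \<inter> F) + \<mu> (T - F) \<le> \<mu> (T \<inter> F) + (\<mu> (Tn n) + (\<Sum>k. \<mu> (R (k+n))))"
      using cover[of n] by (rule add_left_mono)
    also have "\<dots> = (\<mu> (T \<inter> F) + \<mu> (Tn n)) + (\<Sum>k. \<mu> (R (k+n)))" by (simp add: add.assoc)
    also have "\<dots> \<le> \<mu> T + ennreal e" using sepT[of n] n by (intro add_mono) auto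
    finally show "\<mu> (T \<inter> F) + \<mu> (T - F) \<le> \<mu> T + ennreal e" .
  qed
qed

definition wsum :: "('x \<Rightarrow> real \<Rightarrow> ennreal) \<Rightarrow> ('x \<times> real) set \<Rightarrow> ennreal" where
  "wsum q \<pi> = (SUP F\<in>{F. finite F \<and> F \<subseteq> \<pi>}. \<Sum>p\<in>F. q (fst p) (snd p))"
definition Sq :: "real set \<Rightarrow> ('x::metric_space \<Rightarrow> real \<Rightarrow> ennreal) \<Rightarrow> 'x set \<Rightarrow> real \<Rightarrow> ennreal" where
  "Sq \<Delta> q B \<delta> = (SUP \<pi>\<in>{\<pi>. fine_packing_of dist \<Delta> \<delta> B \<pi>}. wsum q \<pi>)"
definition nu0 :: "real set \<Rightarrow> ('x::metric_space \<Rightarrow> real \<Rightarrow> ennreal) \<Rightarrow> 'x set \<Rightarrow> ennreal" where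
  "nu0 \<Delta> q B = (INF \<delta>\<in>{0<..}. Sq \<Delta> q B \<delta>)"
definition nus :: "real set \<Rightarrow> ('x::metric_space \<Rightarrow> real \<Rightarrow> ennreal) \<Rightarrow> 'x set \<Rightarrow> ennreal" where
  "nus \<Delta> q = outer_measure (Pow UNIV) (nu0 \<Delta> q)"

lemma SUP_add_le:
  fixes f g :: "_ \<Rightarrow> ennreal"
  assumes "I \<noteq> {}" "J \<noteq> {}" "\<And>i j. i \<in> I \<Longrightarrow> j \<in> J \<Longrightarrow> f i + g j \<le> C"
  shows "(SUP i\<in>I. f i) + (SUP j\<in>J. g j) \<le> C"
proof -
  have "(SUP i\<in>I. f i) + (SUP j\<in>J. g j) = (SUP i\<in>I. f i + (SUP j\<in>J. g j))"
    using ennreal_SUP_add_left[OF assms(1)] by simp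
  also have "\<dots> \<le> C"
  proof (rule SUP_least)
    fix i assume i: "i \<in> I"
    have "f i + (SUP j\<in>J. g j) = (SUP j\<in>J. f i + g j)" by (rule ennreal_SUP_add_right[OF assms(2)])
    also have "\<dots> \<le> C" using assms(3)[OF i] by (rule SUP_least)
    finally show "f i + (SUP j\<in>J. g j) \<le> C" .
  qed
  finally show ?thesis .
qed

lemma fine_packing_mono:
  "fine_packing_of d \<Delta> \<delta> B \<pi> \<Longrightarrow> B \<subseteq> B' \<Longrightarrow> \<delta> \<le> \<delta>' \<Longrightarrow> fine_packing_of d \<Delta> \<delta>' B' \<pi>"
  unfolding fine_packing_of_def by force

lemma Sq_mono: "B \<subseteq> B' \<Longrightarrow> \<delta> \<le> \<delta>' \<Longrightarrow> Sq \<Delta> q B \<delta> \<le> Sq \<Delta> q B' \<delta>'"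
  unfolding Sq_def by (rule SUP_subset_mono) (auto intro: fine_packing_mono)

lemma nu0_mono: "B \<subseteq> B' \<Longrightarrow> nu0 \<Delta> q B \<le> nu0 \<Delta> q B'"
  unfolding nu0_def by (intro INF_mono) (auto intro: Sq_mono)

lemma wsum_empty: "wsum q {} = 0"
  unfolding wsum_def by simp

lemma nu0_empty: "nu0 \<Delta> q {} = 0"
proof -
  have "fine_packing_of dist \<Delta> \<delta> {} \<pi> \<longleftrightarrow> \<pi> = {}" for \<delta> \<pi>
    unfolding fine_packing_of_def packing_def by auto
  then have e: "Collect (fine_packing_of dist \<Delta> \<delta> {}) = {{}}" for \<delta> by auto
  then have "Sq \<Delta> q {} \<delta> = 0" for \<delta> unfolding Sq_def by (simp only: e) (simp add: wsum_empty)
  then show ?thesis unfolding nu0_def by simp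
qed

lemma nu0_small:
  assumes "\<epsilon> > 0" shows "nu0 \<Delta> q B = (INF \<delta>\<in>{0<..<\<epsilon>}. Sq \<Delta> q B \<delta>)"
  unfolding nu0_def
proof (rule antisym)
  show "(INF \<delta>\<in>{0<..}. Sq \<Delta> q B \<delta>) \<le> (INF \<delta>\<in>{0<..<\<epsilon>}. Sq \<Delta> q B \<delta>)"
    by (rule INF_superset_mono) auto
  show "(INF \<delta>\<in>{0<..<\<epsilon>}. Sq \<Delta> q B \<delta>) \<le> (INF \<delta>\<in>{0<..}. Sq \<Delta> q B \<delta>)"
  proof (rule INF_greatest)
    fix \<delta> :: real assume "\<delta> \<in> {0<..}"
    then have "min \<delta> (\<epsilon>/2) \<in> {0<..<\<epsilon>}" using assms by auto
    then have "(INF \<delta>\<in>{0<..<\<epsilon>}. Sq \<Delta> q B \<delta>) \<le> Sq \<Delta> q B (min \<delta> (\<epsilon>/2))" by (rule INF_lower)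
    also have "\<dots> \<le> Sq \<Delta> q B \<delta>" by (rule Sq_mono) auto
    finally show "(INF \<delta>\<in>{0<..<\<epsilon>}. Sq \<Delta> q B \<delta>) \<le> Sq \<Delta> q B \<delta>" .
  qed
qed

lemma wsum_union:
  assumes "\<pi>1 \<inter> \<pi>2 = {}"
  shows "wsum q \<pi>1 + wsum q \<pi>2 \<le> wsum q (\<pi>1 \<union> \<pi>2)"
  unfolding wsum_def
proof (rule SUP_add_le)
  fix F G assume F: "F \<in> {F. finite F \<and> F \<subseteq> \<pi>1}" and G: "G \<in> {F. finite F \<and> F \<subseteq> \<pi>2}"
  then have "F \<inter> G = {}" using assms by auto
  then have "(\<Sum>p\<in>F. q (fst p) (snd p)) + (\<Sum>p\<in>G. q (fst p) (snd p)) = (\<Sum>p\<in>F \<union> G. q (fst p) (snd p))"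
    using F G by (simp add: sum.union_disjoint)
  also have "\<dots> \<le> (SUP F\<in>{F. finite F \<and> F \<subseteq> \<pi>1 \<union> \<pi>2}. \<Sum>p\<in>F. q (fst p) (snd p))"
    using F G by (intro SUP_upper) auto
  finally show "(\<Sum>p\<in>F. q (fst p) (snd p)) + (\<Sum>p\<in>G. q (fst p) (snd p))
      \<le> (SUP F\<in>{F. finite F \<and> F \<subseteq> \<pi>1 \<union> \<pi>2}. \<Sum>p\<in>F. q (fst p) (snd p))" .
qed auto

lemma nu0_sep:
  assumes e: "e > 0" and sep: "\<forall>a\<in>A. \<forall>b\<in>B. e \<le> dist a b"
  shows "nu0 \<Delta> q A + nu0 \<Delta> q B \<le> nu0 \<Delta> q (A \<union> B)"
proof -
  have "nu0 \<Delta> q A + nu0 \<Delta> q B \<le> (INF \<delta>\<in>{0<..<e}. Sq \<Delta> q (A \<union> B) \<delta>)"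
  proof (rule INF_greatest)
    fix \<delta> assume \<delta>: "\<delta> \<in> {0<..<e}"
    have "nu0 \<Delta> q A + nu0 \<Delta> q B \<le> Sq \<Delta> q A \<delta> + Sq \<Delta> q B \<delta>"
      unfolding nu0_small[OF e] using \<delta> by (intro add_mono INF_lower)
    also have "\<dots> \<le> Sq \<Delta> q (A \<union> B) \<delta>"
      unfolding Sq_def
    proof (rule SUP_add_le)
      fix \<pi>1 \<pi>2 assume p1: "\<pi>1 \<in> {\<pi>. fine_packing_of dist \<Delta> \<delta> A \<pi>}" and p2: "\<pi>2 \<in> {\<pi>. fine_packing_of dist \<Delta> \<delta> B \<pi>}"
      have dAB: "e \<le> dist a b" if "a \<in> A" "b \<in> B" for a b using sep that by auto
      have disj: "\<pi>1 \<inter> \<pi>2 = {}"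
      proof (rule ccontr)
        assume "\<pi>1 \<inter> \<pi>2 \<noteq> {}"
        then obtain p where "p \<in> \<pi>1" "p \<in> \<pi>2" by auto
        then have "fst p \<in> A" "fst p \<in> B" using p1 p2 by (auto simp: fine_packing_of_def)
        then show False using dAB[of "fst p" "fst p"] e by simp
      qed
      have fp: "fine_packing_of dist \<Delta> \<delta> (A \<union> B) (\<pi>1 \<union> \<pi>2)"
        unfolding fine_packing_of_def packing_def
      proof (intro conjI ballI impI)
        fix p r assume p: "p \<in> \<pi>1 \<union> \<pi>2" and r: "r \<in> \<pi>1 \<union> \<pi>2" and ne: "p \<noteq> r"
        have rad: "snd p \<le> \<delta>" using p p1 p2 by (auto simp: fine_packing_of_def)
        show "snd p < dist (fst p) (fst r)"
        proof (cases "p \<in> \<pi>1")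
          case True
          show ?thesis
          proof (cases "r \<in> \<pi>1")
            case True
            then show ?thesis using \<open>p \<in> \<pi>1\<close> ne p1 by (auto simp: fine_packing_of_def packing_def)
          next
            case False
            then have "r \<in> \<pi>2" using r by auto
            then have "e \<le> dist (fst p) (fst r)" using \<open>p \<in> \<pi>1\<close> p1 p2 by (intro dAB) (auto simp: fine_packing_of_def)
            then show ?thesis using rad \<delta> by auto
          qed
        next
          case False
          then have "p \<in> \<pi>2" using p by auto
          show ?thesis
          proof (cases "r \<in> \<pi>2")
            case True
            then show ?thesis using \<open>p \<in> \<pi>2\<close> ne p2 by (auto simp: fine_packing_of_def packing_def)
          next
            case False
            then have "r \<in> \<pi>1" using r by auto
            then have "e \<le> dist (fst r) (fst p)" using \<open>p \<in> \<pi>2\<close> p1 p2 by (intro dAB) (auto simp: fine_packing_of_def)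
            then show ?thesis using rad \<delta> by (auto simp: dist_commute)
          qed
        qed
      qed (use p1 p2 in \<open>auto simp: fine_packing_of_def packing_def\<close>)
      have "wsum q \<pi>1 + wsum q \<pi>2 \<le> wsum q (\<pi>1 \<union> \<pi>2)" by (rule wsum_union[OF disj])
      also have "\<dots> \<le> (SUP \<pi>\<in>{\<pi>. fine_packing_of dist \<Delta> \<delta> (A \<union> B) \<pi>}. wsum q \<pi>)"
        using fp by (intro SUP_upper) auto
      finally show "wsum q \<pi>1 + wsum q \<pi>2 \<le> (SUP \<pi>\<in>{\<pi>. fine_packing_of dist \<Delta> \<delta> (A \<union> B) \<pi>}. wsum q \<pi>)" .
    next
      show "{\<pi>. fine_packing_of dist \<Delta> \<delta> A \<pi>} \<noteq> {}" "{\<pi>. fine_packing_of dist \<Delta> \<delta> B \<pi>} \<noteq> {}"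
        by (auto simp: fine_packing_of_def packing_def intro!: exI[of _ "{}"])
    qed
    finally show "nu0 \<Delta> q A + nu0 \<Delta> q B \<le> Sq \<Delta> q (A \<union> B) \<delta>" .
  qed
  also have "\<dots> = nu0 \<Delta> q (A \<union> B)" by (rule nu0_small[OF e, symmetric])
  finally show ?thesis .
qed

lemma nus_oms: "outer_measure_space (Pow UNIV) (nus \<Delta> q)"
  unfolding nus_def
  by (rule ring_of_sets.outer_measure_space_outer_measure[OF ring_of_sets_Pow])
     (auto simp: positive_def increasing_def nu0_empty nu0_mono)

lemma nus_mono: "A \<subseteq> B \<Longrightarrow> nus \<Delta> q A \<le> nus \<Delta> q B"
  using nus_oms[of \<Delta> q] unfolding outer_measure_space_def increasing_def by auto

lemma nus_empty: "nus \<Delta> q {} = 0"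
  using nus_oms[of \<Delta> q] unfolding outer_measure_space_def positive_def by auto

lemma nus_csub: "nus \<Delta> q (\<Union>i. A i) \<le> (\<Sum>i. nus \<Delta> q (A i))"
proof -
  have "nus \<Delta> q (\<Union>i. A i) = nus \<Delta> q (\<Union>i. disjointed A i)" by (simp add: UN_disjointed_eq)
  also have "\<dots> \<le> (\<Sum>i. nus \<Delta> q (disjointed A i))"
    using nus_oms[of \<Delta> q] unfolding outer_measure_space_def countably_subadditive_def
    by (auto simp: disjoint_family_disjointed)
  also have "\<dots> \<le> (\<Sum>i. nus \<Delta> q (A i))"
    by (intro suminf_le summableI nus_mono disjointed_subset)
  finally show ?thesis .
qed

lemma nus_le_nu0: "nus \<Delta> q X \<le> nu0 \<Delta> q X"
proof -
  have "nus \<Delta> q X \<le> (\<Sum>i. nu0 \<Delta> q (if i = 0 then X else {}))"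
    unfolding nus_def
    by (rule ring_of_sets.outer_measure_le[OF ring_of_sets_Pow])
       (auto simp: positive_def increasing_def nu0_empty nu0_mono)
  also have "\<dots> = nu0 \<Delta> q X"
    by (subst suminf_finite[of "{0}"]) (auto simp: nu0_empty)
  finally show ?thesis .
qed

lemma nus_sep:
  assumes e: "e > 0" and sep: "\<forall>a\<in>A. \<forall>b\<in>B. e \<le> dist a b"
  shows "nus \<Delta> q A + nus \<Delta> q B \<le> nus \<Delta> q (A \<union> B)"
  unfolding nus_def outer_measure_def[of _ _ "A \<union> B"]
proof (rule INF_greatest)
  fix C :: "nat \<Rightarrow> 'a set" assume C: "C \<in> {C. range C \<subseteq> Pow UNIV \<and> disjoint_family C \<and> A \<union> B \<subseteq> (\<Union>i. C i)}"
  have oA: "outer_measure (Pow UNIV) (nu0 \<Delta> q) A \<le> (\<Sum>i. nu0 \<Delta> q (C i \<inter> A))"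
    by (rule ring_of_sets.outer_measure_le[OF ring_of_sets_Pow])
       (use C in \<open>auto simp: positive_def increasing_def nu0_empty nu0_mono\<close>)
  have oB: "outer_measure (Pow UNIV) (nu0 \<Delta> q) B \<le> (\<Sum>i. nu0 \<Delta> q (C i \<inter> B))"
    by (rule ring_of_sets.outer_measure_le[OF ring_of_sets_Pow])
       (use C in \<open>auto simp: positive_def increasing_def nu0_empty nu0_mono\<close>)
  have "outer_measure (Pow UNIV) (nu0 \<Delta> q) A + outer_measure (Pow UNIV) (nu0 \<Delta> q) B
     \<le> (\<Sum>i. nu0 \<Delta> q (C i \<inter> A)) + (\<Sum>i. nu0 \<Delta> q (C i \<inter> B))" using oA oB by (rule add_mono)
  also have "\<dots> = (\<Sum>i. nu0 \<Delta> q (C i \<inter> A) + nu0 \<Delta> q (C i \<inter> B))"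
    by (rule suminf_add) (rule summableI)+
  also have "\<dots> \<le> (\<Sum>i. nu0 \<Delta> q (C i))"
  proof (intro suminf_le summableI)
    fix i
    have "nu0 \<Delta> q (C i \<inter> A) + nu0 \<Delta> q (C i \<inter> B) \<le> nu0 \<Delta> q ((C i \<inter> A) \<union> (C i \<inter> B))"
      using sep by (intro nu0_sep[OF e]) auto
    also have "\<dots> \<le> nu0 \<Delta> q (C i)" by (rule nu0_mono) auto
    finally show "nu0 \<Delta> q (C i \<inter> A) + nu0 \<Delta> q (C i \<inter> B) \<le> nu0 \<Delta> q (C i)" .
  qed
  finally show "outer_measure (Pow UNIV) (nu0 \<Delta> q) A + outer_measure (Pow UNIV) (nu0 \<Delta> q) B
     \<le> (\<Sum>i. nu0 \<Delta> q (C i))" .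
qed

lemma nus_closed:
  assumes "closed F"
  shows "F \<in> lambda_system UNIV (Pow UNIV) (nus \<Delta> q)"
  unfolding lambda_system_def
proof (intro CollectI conjI ballI)
  show "F \<in> Pow UNIV" by simp
next
  fix x :: "'a set"
  have le: "nus \<Delta> q (x \<inter> F) + nus \<Delta> q (x - F) \<le> nus \<Delta> q x"
    by (rule metric_caratheodory[OF nus_mono nus_empty nus_csub nus_sep assms]) auto
  have sa: "subadditive (Pow UNIV) (nus \<Delta> q)"
    using nus_oms[of \<Delta> q] unfolding outer_measure_space_def
    by (intro ring_of_sets.countably_subadditive_subadditive[OF ring_of_sets_Pow]) auto
  have "nus \<Delta> q x = nus \<Delta> q ((x \<inter> F) \<union> (x - F))" by (metis Int_Diff_Un)
  also have "\<dots> \<le> nus \<Delta> q (x \<inter> F) + nus \<Delta> q (x - F)"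
    by (rule subadditiveD[OF sa]) auto
  finally have ge: "nus \<Delta> q x \<le> nus \<Delta> q (x \<inter> F) + nus \<Delta> q (x - F)" .
  have eq1: "F \<inter> x = x \<inter> F" and eq2: "(UNIV - F) \<inter> x = x - F" by auto
  show "nus \<Delta> q (F \<inter> x) + nus \<Delta> q ((UNIV - F) \<inter> x) = nus \<Delta> q x"
    unfolding eq1 eq2 using le ge by (rule antisym)
qed

lemma nus_ms: "measure_space UNIV (lambda_system UNIV (Pow UNIV) (nus \<Delta> q)) (nus \<Delta> q)"
  by (rule sigma_algebra.caratheodory_lemma[OF sigma_algebra_Pow nus_oms])

lemma nus_borel: "sets borel \<subseteq> lambda_system UNIV (Pow UNIV) (nus \<Delta> (q::'a::metric_space \<Rightarrow> real \<Rightarrow> ennreal))"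
proof -
  let ?L = "lambda_system UNIV (Pow UNIV) (nus \<Delta> q)"
  have sa: "sigma_algebra UNIV ?L" using nus_ms[of \<Delta> q] by (simp add: measure_space_def)
  have "{S. open S} \<subseteq> ?L"
  proof
    fix S :: "'a set" assume "S \<in> {S. open S}"
    then have "- S \<in> ?L" by (intro nus_closed) (auto simp: closed_def)
    then have "UNIV - (- S) \<in> ?L" by (rule algebra.lambda_system_Compl[OF algebra_Pow])
    then show "S \<in> ?L" by simp
  qed
  then show ?thesis unfolding sets_borel by (rule sigma_algebra.sigma_sets_subset[OF sa])
qed

lemma nus_sum:
  fixes A :: "'i \<Rightarrow> 'a::metric_space set"
  assumes "finite I" "disjoint_family_on A I" "A ` I \<subseteq> sets borel"
  shows "(\<Sum>i\<in>I. nus \<Delta> q (A i)) = nus \<Delta> q (\<Union>i\<in>I. A i)"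
proof -
  let ?L = "lambda_system UNIV (Pow UNIV) (nus \<Delta> q)"
  let ?N = "measure_of UNIV ?L (nus \<Delta> q)"
  have ms: "measure_space UNIV ?L (nus \<Delta> q)" by (rule nus_ms)
  then have sa: "sigma_algebra UNIV ?L" and pos: "positive ?L (nus \<Delta> q)" and ca: "countably_additive ?L (nus \<Delta> q)"
    by (auto simp: measure_space_def)
  have sN: "sets ?N = ?L"
    using sa by (subst sets_measure_of) (auto simp: sigma_algebra.sigma_sets_eq)
  have AL: "A ` I \<subseteq> ?L" using assms(3) nus_borel by blast
  have em: "emeasure ?N X = nus \<Delta> q X" if "X \<in> ?L" for X
    by (rule emeasure_measure_of_sigma[OF sa pos ca that])
  have UL: "(\<Union>i\<in>I. A i) \<in> ?L"
  proof -
    have "(\<Union>i\<in>I. A i) \<in> sets ?N" using AL sN assms(1) by (intro sets.finite_UN) auto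
    then show ?thesis using sN by simp
  qed
  have "(\<Sum>i\<in>I. emeasure ?N (A i)) = emeasure ?N (\<Union>i\<in>I. A i)"
    by (rule sum_emeasure) (use AL sN assms in auto)
  then show ?thesis using em AL UL by (simp add: image_subset_iff)
qed

lemma sets_pm: "sets (packing_measure \<Delta> h :: 'a::metric_space measure) = sets borel"
  unfolding packing_measure_def
  by (subst sets_measure_of) (auto simp: sets.sigma_sets_eq[of borel, simplified])

lemma space_pm: "space (packing_measure \<Delta> h :: 'a::metric_space measure) = UNIV"
  unfolding packing_measure_def by simp

lemma emeasure_pm_le: "emeasure (packing_measure \<Delta> h) A \<le> packing_outer dist \<Delta> h A"
  unfolding packing_measure_def emeasure_measure_of_conv by auto

lemma c_pre_le_nu0:
  assumes eta: "\<eta> > 0" and BA: "B \<subseteq> A"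
    and hq: "\<forall>x\<in>A. \<forall>r. 0 < r \<longrightarrow> r < \<eta> \<longrightarrow> c * ennreal (h r) \<le> q x r"
  shows "c * pre_packing dist \<Delta> h B \<le> nu0 \<Delta> q B"
  unfolding nu0_def
proof (rule INF_greatest)
  fix \<delta> :: real assume \<delta>: "\<delta> \<in> {0<..}"
  define \<delta>' where "\<delta>' = min \<delta> (\<eta>/2)"
  have \<delta>': "\<delta>' \<in> {0<..}" "\<delta>' \<le> \<delta>" "\<delta>' < \<eta>" using \<delta> eta by (auto simp: \<delta>'_def)
  have "c * pre_packing dist \<Delta> h B \<le> c * (SUP \<pi>\<in>{\<pi>. fine_packing_of dist \<Delta> \<delta>' B \<pi>}. gsum h \<pi>)"
    unfolding pre_packing_def by (intro mult_left_mono INF_lower \<delta>') simp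
  also have "\<dots> = (SUP \<pi>\<in>{\<pi>. fine_packing_of dist \<Delta> \<delta>' B \<pi>}. c * gsum h \<pi>)"
    by (rule SUP_mult_left_ennreal)
  also have "\<dots> \<le> Sq \<Delta> q B \<delta>"
    unfolding Sq_def
  proof (rule SUP_mono)
    fix \<pi> assume \<pi>: "\<pi> \<in> {\<pi>. fine_packing_of dist \<Delta> \<delta>' B \<pi>}"
    have "c * gsum h \<pi> \<le> wsum q \<pi>"
      unfolding gsum_def wsum_def SUP_mult_left_ennreal
    proof (rule SUP_mono)
      fix F assume F: "F \<in> {F. finite F \<and> F \<subseteq> \<pi>}"
      have "c * (\<Sum>p\<in>F. ennreal (h (snd p))) = (\<Sum>p\<in>F. c * ennreal (h (snd p)))"
        by (rule sum_distrib_left)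
      also have "\<dots> \<le> (\<Sum>p\<in>F. q (fst p) (snd p))"
      proof (rule sum_mono)
        fix p assume "p \<in> F"
        then have "p \<in> \<pi>" using F by auto
        then have "fst p \<in> A" "0 < snd p" "snd p < \<eta>"
          using \<pi> BA \<delta>' by (auto simp: fine_packing_of_def packing_def)
        then show "c * ennreal (h (snd p)) \<le> q (fst p) (snd p)" using hq by auto
      qed
      finally show "\<exists>G\<in>{F. finite F \<and> F \<subseteq> \<pi>}. c * (\<Sum>p\<in>F. ennreal (h (snd p))) \<le> (\<Sum>p\<in>G. q (fst p) (snd p))"
        using F by blast
    qed
    moreover have "\<pi> \<in> {\<pi>. fine_packing_of dist \<Delta> \<delta> B \<pi>}"
      using \<pi> \<delta>' by (auto intro: fine_packing_mono)
    ultimately show "\<exists>\<pi>'\<in>{\<pi>. fine_packing_of dist \<Delta> \<delta> B \<pi>}. c * gsum h \<pi> \<le> wsum q \<pi>'" by blast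
  qed
  finally show "c * pre_packing dist \<Delta> h B \<le> Sq \<Delta> q B \<delta>" .
qed

lemma c_outer_le_nus:
  assumes eta: "\<eta> > 0"
    and hq: "\<forall>x\<in>A. \<forall>r. 0 < r \<longrightarrow> r < \<eta> \<longrightarrow> c * ennreal (h r) \<le> q x r"
  shows "c * packing_outer dist \<Delta> h A \<le> nus \<Delta> q A"
  unfolding nus_def outer_measure_def
proof (rule INF_greatest)
  fix C :: "nat \<Rightarrow> 'a set" assume C: "C \<in> {C. range C \<subseteq> Pow UNIV \<and> disjoint_family C \<and> A \<subseteq> (\<Union>i. C i)}"
  have "packing_outer dist \<Delta> h A \<le> (\<Sum>i. pre_packing dist \<Delta> h (C i \<inter> A))"
    unfolding packing_outer_def by (rule INF_lower) (use C in auto)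
  then have "c * packing_outer dist \<Delta> h A \<le> c * (\<Sum>i. pre_packing dist \<Delta> h (C i \<inter> A))"
    by (rule mult_left_mono) simp
  also have "\<dots> = (\<Sum>i. c * pre_packing dist \<Delta> h (C i \<inter> A))" by simp
  also have "\<dots> \<le> (\<Sum>i. nu0 \<Delta> q (C i))"
  proof (intro suminf_le summableI)
    fix i
    have "c * pre_packing dist \<Delta> h (C i \<inter> A) \<le> nu0 \<Delta> q (C i \<inter> A)"
      by (rule c_pre_le_nu0[OF eta _ hq]) auto
    also have "\<dots> \<le> nu0 \<Delta> q (C i)" by (rule nu0_mono) auto
    finally show "c * pre_packing dist \<Delta> h (C i \<inter> A) \<le> nu0 \<Delta> q (C i)" .
  qed
  finally show "c * packing_outer dist \<Delta> h A \<le> (\<Sum>i. nu0 \<Delta> q (C i))" .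
qed

lemma gap_anti: "G \<subseteq> F \<Longrightarrow> gap d F \<le> gap d G"
  unfolding gap_def by (rule INF_superset_mono) auto

lemma gap_le: "x \<in> F \<Longrightarrow> y \<in> F \<Longrightarrow> x \<noteq> y \<Longrightarrow> gap d F \<le> ennreal (d x y)"
  unfolding gap_def by (rule INF_lower2[of "(x,y)"]) auto

lemma gap_empty: "gap d {} = top"
  unfolding gap_def by simp

lemma cap_fin:
  "cap d r K = (SUP G\<in>{G. finite G \<and> G \<subseteq> K \<and> gap d G > ennreal r}. of_nat (card G))"
  (is "_ = ?S")
  unfolding cap_def
proof (rule antisym)
  show "(SUP F\<in>{F. F \<subseteq> K \<and> ennreal r < gap d F}. if finite F then of_nat (card F) else top) \<le> ?S"
  proof (rule SUP_least)
    fix F assume F: "F \<in> {F. F \<subseteq> K \<and> ennreal r < gap d F}"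
    show "(if finite F then of_nat (card F) else top) \<le> ?S"
    proof (cases "finite F")
      case True then show ?thesis using F by (auto intro!: SUP_upper2[of F])
    next
      case False
      have n: "of_nat n \<le> ?S" for n
      proof -
        obtain G where G: "G \<subseteq> F" "finite G" "card G = n" using infinite_arbitrarily_large[OF False] by blast
        have "ennreal r < gap d G" using F gap_anti[OF G(1), of d] by auto
        then show ?thesis using G F by (intro SUP_upper2[of G]) auto
      qed
      have "?S = top"
      proof (rule ccontr)
        assume "?S \<noteq> top"
        then obtain n where "?S < of_nat n" using ennreal_Ex_less_of_nat top.not_eq_extremum by blast
        with n[of n] show False by simp
      qed
      then show ?thesis using False by (subst \<open>?S = top\<close>) simp
    qed
  qed
  show "?S \<le> (SUP F\<in>{F. F \<subseteq> K \<and> ennreal r < gap d F}. if finite F then of_nat (card F) else top)"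
    by (rule SUP_mono) auto
qed

lemma sum_SUP_le:
  fixes v :: "'p \<Rightarrow> 's \<Rightarrow> ennreal"
  assumes "finite F" "\<And>p. p \<in> F \<Longrightarrow> S p \<noteq> {}"
    and "\<And>G. (\<forall>p\<in>F. G p \<in> S p) \<Longrightarrow> c + (\<Sum>p\<in>F. v p (G p)) \<le> B"
  shows "c + (\<Sum>p\<in>F. SUP s\<in>S p. v p s) \<le> B"
  using assms
proof (induction F arbitrary: c rule: finite_induct)
  case empty
  then show ?case by auto
next
  case (insert q F)
  have "c + (\<Sum>p\<in>insert q F. SUP s\<in>S p. v p s) = (c + (SUP s\<in>S q. v q s)) + (\<Sum>p\<in>F. SUP s\<in>S p. v p s)"
    using insert by (simp add: add.assoc)
  also have "\<dots> \<le> B"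
  proof (rule insert.IH)
    show "\<And>p. p \<in> F \<Longrightarrow> S p \<noteq> {}" using insert by auto
    fix G assume G: "\<forall>p\<in>F. G p \<in> S p"
    have ne: "S q \<noteq> {}" using insert.prems(1)[of q] by simp
    have "c + (SUP s\<in>S q. v q s) = (SUP s\<in>S q. c + v q s)" by (rule ennreal_SUP_add_right[OF ne])
    then have "c + (SUP s\<in>S q. v q s) + (\<Sum>p\<in>F. v p (G p)) = (SUP s\<in>S q. c + v q s) + (\<Sum>p\<in>F. v p (G p))"
      by simp
    also have "\<dots> = (SUP s\<in>S q. c + v q s + (\<Sum>p\<in>F. v p (G p)))"
      by (rule ennreal_SUP_add_left[OF ne, symmetric])
    also have "\<dots> \<le> B"
    proof (rule SUP_least)
      fix s assume s: "s \<in> S q"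
      define G' where "G' = G(q := s)"
      have "\<forall>p\<in>insert q F. G' p \<in> S p" using G s insert.hyps by (auto simp: G'_def)
      then have "c + (\<Sum>p\<in>insert q F. v p (G' p)) \<le> B" by (rule insert.prems(2))
      moreover have "(\<Sum>p\<in>F. v p (G' p)) = (\<Sum>p\<in>F. v p (G p))"
        using insert.hyps by (intro sum.cong) (auto simp: G'_def)
      ultimately show "c + v q s + (\<Sum>p\<in>F. v p (G p)) \<le> B"
        using insert.hyps by (simp add: G'_def add.assoc)
    qed
    finally show "c + (SUP s\<in>S q. v q s) + (\<Sum>p\<in>F. v p (G p)) \<le> B" .
  qed
  finally show ?case .
qed

lemma nu0_le_pre:
  fixes E :: "('a::metric_space \<times> 'b::metric_space) set"
  assumes hg: "hausdorff_function g" and hh: "hausdorff_function h"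
  shows "nu0 \<Delta> (\<lambda>x r. cap dist r {y. (x, y) \<in> E} * ennreal (g r) * ennreal (h r)) UNIV
     \<le> pre_packing max_dist \<Delta> (\<lambda>r. g r * h r) E"
  unfolding nu0_def pre_packing_def
proof (rule INF_mono)
  fix \<delta> :: real assume \<delta>: "\<delta> \<in> {0<..}"
  let ?Q = "\<lambda>x r. cap dist r {y. (x, y) \<in> E} * ennreal (g r) * ennreal (h r)"
  let ?S = "SUP \<pi>\<in>{\<pi>. fine_packing_of max_dist \<Delta> \<delta> E \<pi>}. gsum (\<lambda>r. g r * h r) \<pi>"
  have gpos: "0 \<le> g r" "0 \<le> h r" if "0 < r" for r
    using hg hh that unfolding hausdorff_function_def by (auto intro: less_imp_le)
  have "Sq \<Delta> ?Q UNIV \<delta> \<le> ?S"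
    unfolding Sq_def
  proof (rule SUP_least)
    fix \<pi> :: "('a \<times> real) set" assume \<pi>: "\<pi> \<in> {\<pi>. fine_packing_of dist \<Delta> \<delta> UNIV \<pi>}"
    then have pk: "packing dist \<pi>" and rad: "\<forall>p\<in>\<pi>. snd p \<le> \<delta>" and rD: "snd ` \<pi> \<subseteq> \<Delta>"
      by (auto simp: fine_packing_of_def)
    show "wsum ?Q \<pi> \<le> ?S"
      unfolding wsum_def
    proof (rule SUP_least)
      fix F assume F: "F \<in> {F. finite F \<and> F \<subseteq> \<pi>}"
      define S where "S p = {G. finite G \<and> G \<subseteq> {y. (fst p, y) \<in> E} \<and> gap dist G > ennreal (snd p)}" for p
      define v where "v p G = of_nat (card G) * (ennreal (g (snd p)) * ennreal (h (snd p)))" for p :: "'a \<times> real" and G :: "'b set"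
      have Qeq: "?Q (fst p) (snd p) = (SUP G\<in>S p. v p G)" for p
        unfolding cap_fin S_def v_def mult.assoc[symmetric] by (simp add: SUP_mult_right_ennreal)
      have "0 + (\<Sum>p\<in>F. SUP G\<in>S p. v p G) \<le> ?S"
      proof (rule sum_SUP_le)
        show "finite F" using F by auto
        show "S p \<noteq> {}" for p unfolding S_def by (auto intro!: exI[of _ "{}"] simp: gap_empty)
        fix G assume G: "\<forall>p\<in>F. G p \<in> S p"
        define \<pi>' where "\<pi>' = (\<lambda>(p, y). ((fst p, y), snd p)) ` Sigma F G"
        have finF: "finite F" using F by auto
        have finG: "\<forall>p\<in>F. finite (G p)" using G by (auto simp: S_def)
        have inj: "inj_on (\<lambda>(p, y). ((fst p, y), snd p)) (Sigma F G)"
          by (auto simp: inj_on_def prod_eq_iff)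
        have fin': "finite \<pi>'" unfolding \<pi>'_def using finF finG by auto
        have fp: "fine_packing_of max_dist \<Delta> \<delta> E \<pi>'"
          unfolding fine_packing_of_def packing_def
        proof (intro conjI ballI impI subsetI)
          fix e assume "e \<in> \<pi>'"
          then obtain p y where py: "p \<in> F" "y \<in> G p" "e = ((fst p, y), snd p)" by (auto simp: \<pi>'_def)
          then have "p \<in> \<pi>" using F by auto
          then show "0 < snd e" "snd e \<le> \<delta>" using pk rad py by (auto simp: packing_def)
        next
          fix e1 e2 assume e1: "e1 \<in> \<pi>'" and e2: "e2 \<in> \<pi>'" and ne: "e1 \<noteq> e2"
          obtain p y where py: "p \<in> F" "y \<in> G p" "e1 = ((fst p, y), snd p)" using e1 by (auto simp: \<pi>'_def)
          obtain p' y' where py': "p' \<in> F" "y' \<in> G p'" "e2 = ((fst p', y'), snd p')" using e2 by (auto simp: \<pi>'_def)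
          have pp: "p \<in> \<pi>" "p' \<in> \<pi>" using F py py' by auto
          show "snd e1 < max_dist (fst e1) (fst e2)"
          proof (cases "p = p'")
            case True
            then have "y \<noteq> y'" using ne py py' by auto
            then have "gap dist (G p) \<le> ennreal (dist y y')" using py py' True by (intro gap_le) auto
            moreover have "ennreal (snd p) < gap dist (G p)" using G py by (auto simp: S_def)
            ultimately have "ennreal (snd p) < ennreal (dist y y')" by (rule less_le_trans[rotated])
            then have "snd p < dist y y'" by (metis ennreal_leI not_le)
            then show ?thesis using py py' True by (auto simp: max_dist_def)
          next
            case False
            then have "snd p < dist (fst p) (fst p')" using pk pp by (auto simp: packing_def)
            then show ?thesis using py py' by (auto simp: max_dist_def)
          qed
        next
          fix z assume "z \<in> fst ` \<pi>'"
          then obtain p y where py: "p \<in> F" "y \<in> G p" "z = (fst p, y)" by (auto simp: \<pi>'_def)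
          then show "z \<in> E" using G by (auto simp: S_def)
        next
          fix z assume "z \<in> snd ` \<pi>'"
          then obtain p y where py: "p \<in> F" "z = snd p" by (auto simp: \<pi>'_def)
          then show "z \<in> \<Delta>" using F rD by auto
        qed
        have "(\<Sum>p\<in>F. v p (G p)) = (\<Sum>p\<in>F. \<Sum>y\<in>G p. ennreal (g (snd p) * h (snd p)))"
        proof (rule sum.cong[OF refl])
          fix p assume p: "p \<in> F"
          then have "0 < snd p" using F pk by (auto simp: packing_def)
          then show "v p (G p) = (\<Sum>y\<in>G p. ennreal (g (snd p) * h (snd p)))"
            using gpos[of "snd p"] by (simp add: v_def ennreal_mult)
        qed
        also have "\<dots> = (\<Sum>(p, y)\<in>Sigma F G. ennreal (g (snd p) * h (snd p)))"
          by (rule sum.Sigma[OF finF finG])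
        also have "\<dots> = (\<Sum>e\<in>\<pi>'. ennreal (g (snd e) * h (snd e)))"
          unfolding \<pi>'_def by (subst sum.reindex[OF inj]) (auto intro!: sum.cong)
        also have "\<dots> \<le> gsum (\<lambda>r. g r * h r) \<pi>'"
          unfolding gsum_def using fin' by (intro SUP_upper) auto
        also have "\<dots> \<le> ?S" using fp by (intro SUP_upper) auto
        finally show "0 + (\<Sum>p\<in>F. v p (G p)) \<le> ?S" by simp
      qed
      then show "(\<Sum>p\<in>F. ?Q (fst p) (snd p)) \<le> ?S" by (simp add: Qeq)
    qed
  qed
  then show "\<exists>\<delta>'\<in>{0<..}. Sq \<Delta> ?Q UNIV \<delta>' \<le> ?S" using \<delta> by blast
qed

definition Tm :: "nat \<Rightarrow> 'b::metric_space set \<Rightarrow> ennreal" where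
  "Tm m K = (SUP F\<in>{F. finite F \<and> F \<subseteq> K \<and> card F = Suc m}. gap dist F)"

lemma cap_le_Tm: "cap dist r K \<le> of_nat m \<longleftrightarrow> Tm m K \<le> ennreal r"
proof
  assume c: "cap dist r K \<le> of_nat m"
  show "Tm m K \<le> ennreal r"
    unfolding Tm_def
  proof (rule SUP_least, rule ccontr)
    fix F assume F: "F \<in> {F. finite F \<and> F \<subseteq> K \<and> card F = Suc m}" and n: "\<not> gap dist F \<le> ennreal r"
    then have "of_nat (card F) \<le> cap dist r K" unfolding cap_fin by (intro SUP_upper) auto
    then have "of_nat (Suc m) \<le> (of_nat m :: ennreal)" using c F by (metis (mono_tags) mem_Collect_eq order_trans)
    then show False by (simp only: of_nat_le_iff)
  qed
next
  assume t: "Tm m K \<le> ennreal r"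
  show "cap dist r K \<le> of_nat m"
    unfolding cap_fin
  proof (rule SUP_least, rule ccontr)
    fix G assume G: "G \<in> {G. finite G \<and> G \<subseteq> K \<and> ennreal r < gap dist G}" and n: "\<not> of_nat (card G) \<le> (of_nat m :: ennreal)"
    then have "Suc m \<le> card G" by simp
    then obtain F where F: "F \<subseteq> G" "card F = Suc m" using obtain_subset_with_card_n by metis
    have fF: "finite F" using F G finite_subset by auto
    have "ennreal r < gap dist F" using G gap_anti[OF F(1), of dist] by auto
    also have "gap dist F \<le> Tm m K" unfolding Tm_def using F G fF by (intro SUP_upper) auto
    finally show False using t by simp
  qed
qed

lemma cap_mult_less:
  fixes gr :: ennreal
  assumes gr: "gr > 0"
  shows "cap dist r K * gr < t \<longleftrightarrow> (\<exists>m. Tm m K \<le> ennreal r \<and> of_nat m * gr < t)"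
proof
  assume "\<exists>m. Tm m K \<le> ennreal r \<and> of_nat m * gr < t"
  then obtain m where m: "Tm m K \<le> ennreal r" "of_nat m * gr < t" by blast
  have "cap dist r K * gr \<le> of_nat m * gr" using m(1) cap_le_Tm by (intro mult_right_mono) auto
  then show "cap dist r K * gr < t" using m(2) by simp
next
  assume lt: "cap dist r K * gr < t"
  have "cap dist r K \<noteq> top"
  proof
    assume "cap dist r K = top"
    then have "cap dist r K * gr = top" using gr by (simp add: ennreal_mult_eq_top_iff)
    with lt show False by simp
  qed
  then obtain n where "cap dist r K < of_nat n" using ennreal_Ex_less_of_nat top.not_eq_extremum by blast
  then have ex: "\<exists>n. cap dist r K \<le> of_nat n" using less_imp_le by blast
  define m where "m = (LEAST m. cap dist r K \<le> of_nat m)"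
  have m1: "cap dist r K \<le> of_nat m" unfolding m_def by (rule LeastI_ex[OF ex])
  have m2: "cap dist r K = of_nat m"
  proof (cases m)
    case 0 then show ?thesis using m1 by simp
  next
    case (Suc k)
    have "\<not> cap dist r K \<le> of_nat k"
    proof -
      have "k < (LEAST m. cap dist r K \<le> of_nat m)" using Suc unfolding m_def[symmetric] by simp
      then show ?thesis by (rule not_less_Least)
    qed
    then have "\<not> Tm k K \<le> ennreal r" using cap_le_Tm by blast
    then have "ennreal r < Tm k K" by simp
    then obtain F where F: "F \<in> {F. finite F \<and> F \<subseteq> K \<and> card F = Suc k}" "ennreal r < gap dist F"
      unfolding Tm_def less_SUP_iff by blast
    then have "of_nat (card F) \<le> cap dist r K" unfolding cap_fin by (intro SUP_upper) auto
    then have "of_nat m \<le> cap dist r K" using F Suc by simp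
    then show ?thesis using m1 by simp
  qed
  show "\<exists>m. Tm m K \<le> ennreal r \<and> of_nat m * gr < t"
    using m1 m2 lt cap_le_Tm[of r K m] by (intro exI[of _ m]) auto
qed

lemma downset_borel:
  fixes D :: "ennreal set"
  assumes "\<And>a b. a \<le> b \<Longrightarrow> b \<in> D \<Longrightarrow> a \<in> D"
  shows "D \<in> sets borel"
proof (cases "Sup D \<in> D")
  case True
  then have "D = {..Sup D}" using assms by (auto intro: Sup_upper)
  then have "closed D" by (metis closed_atMost)
  then show ?thesis by (rule borel_closed)
next
  case False
  have "D = {..<Sup D}"
  proof
    show "D \<subseteq> {..<Sup D}"
    proof
      fix x assume "x \<in> D"
      then have "x \<le> Sup D" "x \<noteq> Sup D" using False by (auto intro: Sup_upper)
      then show "x \<in> {..<Sup D}" by simp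
    qed
    show "{..<Sup D} \<subseteq> D"
    proof
      fix x assume "x \<in> {..<Sup D}"
      then obtain y where "y \<in> D" "x < y" using less_Sup_iff by auto
      then show "x \<in> D" using assms[of x y] by simp
    qed
  qed
  then have "open D" by (metis open_lessThan)
  then show ?thesis by (rule borel_open)
qed

lemma gap_perturb:
  fixes F' K :: "'b::metric_space set"
  assumes fin: "finite F'" and near: "\<forall>y\<in>F'. \<exists>z\<in>K. dist y z < \<epsilon>" and e: "\<epsilon> > 0"
  shows "gap dist F' \<le> Tm m K + ennreal (2*\<epsilon>) \<or> card F' \<noteq> Suc m"
proof (cases "gap dist F' \<le> ennreal (2*\<epsilon>)")
  case True
  then show ?thesis by (auto intro: order_trans add_increasing)
next
  case False
  then have big: "ennreal (2*\<epsilon>) < gap dist F'" by simp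
  obtain zf where zf: "\<forall>y\<in>F'. zf y \<in> K \<and> dist y (zf y) < \<epsilon>" using near by metis
  have inj: "inj_on zf F'"
  proof (rule inj_onI, rule ccontr)
    fix y1 y2 assume y: "y1 \<in> F'" "y2 \<in> F'" "zf y1 = zf y2" "y1 \<noteq> y2"
    have "dist y1 y2 \<le> dist y1 (zf y1) + dist y2 (zf y2)" using y(3) dist_triangle3[of y1 y2 "zf y1"] by (simp add: dist_commute)
    also have "\<dots> < 2 * \<epsilon>"
    proof -
      have "dist y1 (zf y1) < \<epsilon>" "dist y2 (zf y2) < \<epsilon>" using zf y(1,2) by auto
      then show ?thesis by linarith
    qed
    finally have "ennreal (dist y1 y2) \<le> ennreal (2 * \<epsilon>)" by (intro ennreal_leI) simp
    moreover have "gap dist F' \<le> ennreal (dist y1 y2)" using y by (intro gap_le) auto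
    ultimately show False using big by simp
  qed
  show ?thesis
  proof (rule disjCI)
    assume "\<not> card F' \<noteq> Suc m"
    then have card: "card F' = Suc m" by simp
    define F where "F = zf ` F'"
    have F: "finite F" "F \<subseteq> K" "card F = Suc m" using fin zf card inj by (auto simp: F_def card_image)
    have gT: "gap dist F \<le> Tm m K" unfolding Tm_def using F by (intro SUP_upper) auto
    have "gap dist F' \<le> gap dist F + ennreal (2*\<epsilon>)"
    proof (rule ennreal_le_epsilon)
      fix \<eta> :: real assume top: "gap dist F + ennreal (2*\<epsilon>) < top" and \<eta>: "0 < \<eta>"
      then have "gap dist F \<noteq> top" by auto
      then obtain a where a: "gap dist F = ennreal a" "0 \<le> a" by (cases "gap dist F" rule: ennreal_cases) auto
      have "gap dist F < ennreal (a + \<eta>)" using a \<eta> by (auto intro: ennreal_lessI)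
      then obtain pq where pq: "pq \<in> {(x, y). x \<in> F \<and> y \<in> F \<and> x \<noteq> y}" "ennreal (dist (fst pq) (snd pq)) < ennreal (a + \<eta>)"
        unfolding gap_def INF_less_iff by blast
      then obtain u v where uv: "u \<in> F'" "v \<in> F'" "zf u \<noteq> zf v" "pq = (zf u, zf v)" by (auto simp: F_def)
      then have "u \<noteq> v" by auto
      then have g1: "gap dist F' \<le> ennreal (dist u v)" using uv by (intro gap_le) auto
      have d1: "dist u v \<le> dist (zf u) (zf v) + 2*\<epsilon>"
      proof -
        have "dist u v \<le> dist u (zf u) + dist (zf u) v" by (rule dist_triangle)
        moreover have "dist (zf u) v \<le> dist (zf u) (zf v) + dist (zf v) v" by (rule dist_triangle)
        moreover have "dist u (zf u) < \<epsilon>" "dist v (zf v) < \<epsilon>" using zf uv by auto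
        moreover have "dist (zf v) v = dist v (zf v)" by (rule dist_commute)
        ultimately show ?thesis by linarith
      qed
      have d2: "dist (zf u) (zf v) < a + \<eta>" using pq uv by (auto simp: ennreal_less_iff)
      have "dist u v \<le> a + 2*\<epsilon> + \<eta>" using d1 d2 by linarith
      then have "ennreal (dist u v) \<le> ennreal (a + 2*\<epsilon> + \<eta>)" by (rule ennreal_leI)
      moreover have "ennreal (a + 2*\<epsilon> + \<eta>) = ennreal a + ennreal (2*\<epsilon>) + ennreal \<eta>"
        using a \<eta> e by (simp add: ennreal_plus)
      ultimately have "ennreal (dist u v) \<le> gap dist F + ennreal (2*\<epsilon>) + ennreal \<eta>" using a(1) by simp
      with g1 show "gap dist F' \<le> gap dist F + ennreal (2*\<epsilon>) + ennreal \<eta>" by (rule order_trans)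
    qed
    also have "\<dots> \<le> Tm m K + ennreal (2*\<epsilon>)" using gT by (rule add_right_mono)
    finally show "gap dist F' \<le> Tm m K + ennreal (2*\<epsilon>)" .
  qed
qed

lemma Tm_usc:
  fixes E :: "('a::metric_space \<times> 'b::metric_space) set"
  assumes cE: "compact E" and lt: "Tm m {y. (x, y) \<in> E} < s"
  shows "\<exists>U. open U \<and> x \<in> U \<and> (\<forall>x'\<in>U. Tm m {y. (x', y) \<in> E} < s)"
proof -
  define K where "K = {y. (x, y) \<in> E}"
  have "Tm m K \<noteq> top" using lt K_def by (auto simp: top_unique)
  then obtain a where a: "Tm m K = ennreal a" "0 \<le> a" by (cases "Tm m K" rule: ennreal_cases) auto
  obtain \<epsilon> where \<epsilon>: "\<epsilon> > 0" "Tm m K + ennreal (2*\<epsilon>) < s"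
  proof (cases "s = top")
    case True
    show ?thesis by (rule that[of 1]) (use a True in \<open>auto simp: ennreal_plus[symmetric]\<close>)
  next
    case False
    then obtain b where b: "s = ennreal b" "0 \<le> b" by (cases s rule: ennreal_cases) auto
    have ab: "a < b" using lt a b K_def by (auto simp: ennreal_less_iff)
    show ?thesis
    proof (rule that[of "(b - a)/4"])
      show "0 < (b - a) / 4" using ab by simp
      have "Tm m K + ennreal (2 * ((b - a) / 4)) = ennreal (a + 2 * ((b - a) / 4))"
        using a ab by (simp add: ennreal_plus)
      also have "\<dots> < ennreal b" using ab b a(2) by (intro ennreal_lessI) (auto simp: field_simps)
      finally show "Tm m K + ennreal (2 * ((b - a) / 4)) < s" using b by simp
    qed
  qed
  define C where "C = E \<inter> (\<Inter>z\<in>K. {p. \<epsilon> \<le> dist (snd p) z})"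
  have "closed (\<Inter>z\<in>K. {p::'a \<times> 'b. \<epsilon> \<le> dist (snd p) z})"
    by (intro closed_INT ballI closed_Collect_le continuous_intros)
  then have "compact C" unfolding C_def by (rule compact_Int_closed[OF cE])
  then have "compact (fst ` C)" by (intro compact_continuous_image continuous_intros)
  then have cl: "closed (fst ` C)" by (rule compact_imp_closed)
  define U where "U = - fst ` C"
  have oU: "open U" using cl unfolding U_def by auto
  have xU: "x \<in> U" unfolding U_def
  proof
    assume "x \<in> fst ` C"
    then obtain y where "(x, y) \<in> C" by force
    then have "y \<in> K" "\<epsilon> \<le> dist y y" unfolding C_def K_def by auto
    with \<epsilon> show False by simp
  qed
  have "Tm m {y. (x', y) \<in> E} < s" if x': "x' \<in> U" for x'
  proof -
    have near: "\<exists>z\<in>K. dist y z < \<epsilon>" if "(x', y) \<in> E" for y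
    proof (rule ccontr)
      assume "\<not> (\<exists>z\<in>K. dist y z < \<epsilon>)"
      then have "(x', y) \<in> C" using that unfolding C_def by (auto simp: not_less)
      then have "x' \<in> fst ` C" by force
      with x' show False unfolding U_def by auto
    qed
    have "Tm m {y. (x', y) \<in> E} \<le> Tm m K + ennreal (2*\<epsilon>)"
      unfolding Tm_def[of m "{y. (x', y) \<in> E}"]
    proof (rule SUP_least)
      fix F' assume F': "F' \<in> {F. finite F \<and> F \<subseteq> {y. (x', y) \<in> E} \<and> card F = Suc m}"
      then have "\<forall>y\<in>F'. \<exists>z\<in>K. dist y z < \<epsilon>" using near by auto
      from gap_perturb[OF _ this \<epsilon>(1), of m] F'
      show "gap dist F' \<le> Tm m K + ennreal (2*\<epsilon>)" by auto
    qed
    then show ?thesis using \<epsilon>(2) by simp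
  qed
  then show ?thesis using oU xU unfolding K_def by blast
qed

lemma Tm_meas:
  fixes E :: "('a::metric_space \<times> 'b::metric_space) set"
  assumes cE: "compact E"
  shows "(\<lambda>x. Tm m {y. (x, y) \<in> E}) \<in> borel_measurable borel"
proof (rule borel_measurableI_less)
  fix s
  have "open {x. Tm m {y. (x, y) \<in> E} < s}"
  proof (subst open_subopen, intro ballI)
    fix x assume "x \<in> {x. Tm m {y. (x, y) \<in> E} < s}"
    then obtain U where "open U" "x \<in> U" "\<forall>x'\<in>U. Tm m {y. (x', y) \<in> E} < s"
      using Tm_usc[OF cE] by blast
    then show "\<exists>T. open T \<and> x \<in> T \<and> T \<subseteq> {x. Tm m {y. (x, y) \<in> E} < s}" by blast
  qed
  then show "{x \<in> space borel. Tm m {y. (x, y) \<in> E} < s} \<in> sets borel" by simp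
qed

definition psi :: "(real \<Rightarrow> real) \<Rightarrow> real \<Rightarrow> 'b::metric_space set \<Rightarrow> ennreal" where
  "psi g \<eta> K = (INF r\<in>{0<..<\<eta>}. cap dist r K * ennreal (g r))"

lemma psi_meas:
  fixes E :: "('a::metric_space \<times> 'b::metric_space) set"
  assumes hg: "hausdorff_function g" and cE: "compact E"
  shows "(\<lambda>x. psi g \<eta> {y. (x, y) \<in> E}) \<in> borel_measurable borel"
proof (rule borel_measurableI_less)
  fix t :: ennreal
  define D where "D m = {s::ennreal. \<exists>r. 0 < r \<and> r < \<eta> \<and> s \<le> ennreal r \<and> of_nat m * ennreal (g r) < t}" for m
  have gpos: "ennreal (g r) > 0" if "r > 0" for r
    using hg that unfolding hausdorff_function_def by auto
  have eq: "{x \<in> space borel. psi g \<eta> {y. (x, y) \<in> E} < t}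
      = (\<Union>m. (\<lambda>x. Tm m {y. (x, y) \<in> E}) -` D m \<inter> space borel)"
  proof -
    have "psi g \<eta> K < t \<longleftrightarrow> (\<exists>m. Tm m K \<in> D m)" for K :: "'b set"
    proof -
      have "psi g \<eta> K < t \<longleftrightarrow> (\<exists>r\<in>{0<..<\<eta>}. cap dist r K * ennreal (g r) < t)"
        unfolding psi_def by (rule INF_less_iff)
      also have "\<dots> \<longleftrightarrow> (\<exists>r\<in>{0<..<\<eta>}. \<exists>m. Tm m K \<le> ennreal r \<and> of_nat m * ennreal (g r) < t)"
      proof (rule bex_cong[OF refl])
        fix r assume "r \<in> {0<..<\<eta>}"
        then show "cap dist r K * ennreal (g r) < t \<longleftrightarrow> (\<exists>m. Tm m K \<le> ennreal r \<and> of_nat m * ennreal (g r) < t)"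
          by (intro cap_mult_less gpos) auto
      qed
      also have "\<dots> \<longleftrightarrow> (\<exists>m. Tm m K \<in> D m)" unfolding D_def mem_Collect_eq
      proof
        assume "\<exists>r\<in>{0<..<\<eta>}. \<exists>m. Tm m K \<le> ennreal r \<and> of_nat m * ennreal (g r) < t"
        then obtain r m where "r \<in> {0<..<\<eta>}" "Tm m K \<le> ennreal r" "of_nat m * ennreal (g r) < t" by blast
        then show "\<exists>m r. 0 < r \<and> r < \<eta> \<and> Tm m K \<le> ennreal r \<and> of_nat m * ennreal (g r) < t" by auto
      next
        assume "\<exists>m r. 0 < r \<and> r < \<eta> \<and> Tm m K \<le> ennreal r \<and> of_nat m * ennreal (g r) < t"
        then obtain r m where "0 < r" "r < \<eta>" "Tm m K \<le> ennreal r" "of_nat m * ennreal (g r) < t" by blast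
        then show "\<exists>r\<in>{0<..<\<eta>}. \<exists>m. Tm m K \<le> ennreal r \<and> of_nat m * ennreal (g r) < t" by auto
      qed
      finally show ?thesis .
    qed
    then show ?thesis by auto
  qed
  have "D m \<in> sets borel" for m
    by (rule downset_borel) (auto simp: D_def intro: order_trans)
  then have "(\<lambda>x. Tm m {y. (x, y) \<in> E}) -` D m \<inter> space borel \<in> sets borel" for m
    by (intro measurable_sets[OF Tm_meas[OF cE]])
  then show "{x \<in> space borel. psi g \<eta> {y. (x, y) \<in> E} < t} \<in> sets borel"
    unfolding eq by (intro sets.countable_UN) auto
qed

lemma lb_SUP: "lower_box0 dist g K = (SUP n. psi g (1 / real (Suc n)) K)"
  unfolding lower_box0_def Liminf_def psi_def
proof (rule antisym)
  show "(SUP P\<in>{P. eventually P (at_right 0)}. INF x\<in>Collect P. cap dist x K * ennreal (g x))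
      \<le> (SUP n. INF r\<in>{0<..<1 / real (Suc n)}. cap dist r K * ennreal (g r))"
  proof (rule SUP_least)
    fix P assume "P \<in> {P. eventually P (at_right (0::real))}"
    then obtain b where b: "b > 0" "\<forall>y>0. y < b \<longrightarrow> P y"
      using eventually_at_right[of 0 1 P] by auto
    obtain n where n: "inverse (real (Suc n)) < b"
      using reals_Archimedean[OF b(1)] by blast
    have "{0<..<1 / real (Suc n)} \<subseteq> Collect P" using b n by (auto simp: inverse_eq_divide)
    then have "(INF x\<in>Collect P. cap dist x K * ennreal (g x)) \<le> (INF r\<in>{0<..<1 / real (Suc n)}. cap dist r K * ennreal (g r))"
      by (rule INF_superset_mono) simp
    also have "\<dots> \<le> (SUP n. INF r\<in>{0<..<1 / real (Suc n)}. cap dist r K * ennreal (g r))"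
      by (rule SUP_upper) simp
    finally show "(INF x\<in>Collect P. cap dist x K * ennreal (g x)) \<le> (SUP n. INF r\<in>{0<..<1 / real (Suc n)}. cap dist r K * ennreal (g r))" .
  qed
  show "(SUP n. INF r\<in>{0<..<1 / real (Suc n)}. cap dist r K * ennreal (g r))
      \<le> (SUP P\<in>{P. eventually P (at_right 0)}. INF x\<in>Collect P. cap dist x K * ennreal (g x))"
  proof (rule SUP_least)
    fix n :: nat
    have ev: "eventually (\<lambda>x. x \<in> {0<..<1 / real (Suc n)}) (at_right 0)"
      by (rule eventually_at_right_real) simp
    show "(INF r\<in>{0<..<1 / real (Suc n)}. cap dist r K * ennreal (g r))
      \<le> (SUP P\<in>{P. eventually P (at_right 0)}. INF x\<in>Collect P. cap dist x K * ennreal (g x))"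
    proof (rule SUP_upper2[of "\<lambda>x. x \<in> {0<..<1 / real (Suc n)}"])
      show "(\<lambda>x. x \<in> {0<..<1 / real (Suc n)}) \<in> {P. eventually P (at_right 0)}" using ev by simp
    qed (simp only: Collect_mem_eq order_refl)
  qed
qed

lemma psi_mono: "\<eta>' \<le> \<eta> \<Longrightarrow> psi g \<eta> K \<le> psi g \<eta>' K"
  unfolding psi_def by (rule INF_superset_mono) auto

lemma int_psi_le:
  fixes E :: "('a::metric_space \<times> 'b::metric_space) set"
  assumes hg: "hausdorff_function g" and hh: "hausdorff_function h" and cE: "compact E" and eta: "\<eta> > 0"
  shows "(\<integral>\<^sup>+ x. psi g \<eta> {y. (x, y) \<in> E} \<partial>(packing_measure \<Delta> h)) \<le> pre_packing max_dist \<Delta> (\<lambda>r. g r * h r) E"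
proof -
  let ?M = "packing_measure \<Delta> h :: 'a measure"
  let ?Q = "\<lambda>x r. cap dist r {y. (x, y) \<in> E} * ennreal (g r) * ennreal (h r)"
  let ?f = "\<lambda>x. psi g \<eta> {y. (x, y) \<in> E}"
  show ?thesis
    unfolding nn_integral_def
  proof (rule SUP_least)
    fix s assume s: "s \<in> {s. simple_function ?M s \<and> s \<le> ?f}"
    then have sf: "simple_function ?M s" and sle: "\<And>x. s x \<le> ?f x" by (auto simp: le_fun_def)
    define A where "A c = s -` {c}" for c
    have fin: "finite (s ` UNIV)" using simple_functionD(1)[OF sf] by (simp add: space_pm)
    have AB: "A c \<in> sets borel" for c
      using simple_functionD(2)[OF sf, of "{c}"] by (simp add: space_pm sets_pm A_def)
    have tm: "c * emeasure ?M (A c) \<le> nus \<Delta> ?Q (A c)" for c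
    proof -
      have hq: "\<forall>x\<in>A c. \<forall>r. 0 < r \<longrightarrow> r < \<eta> \<longrightarrow> c * ennreal (h r) \<le> ?Q x r"
      proof (intro ballI allI impI)
        fix x r assume x: "x \<in> A c" and r: "0 < r" "r < \<eta>"
        have "c = s x" using x by (simp add: A_def)
        also have "\<dots> \<le> ?f x" by (rule sle)
        also have "\<dots> \<le> cap dist r {y. (x, y) \<in> E} * ennreal (g r)"
          unfolding psi_def using r by (intro INF_lower) auto
        finally show "c * ennreal (h r) \<le> ?Q x r" by (rule mult_right_mono) simp
      qed
      have "c * emeasure ?M (A c) \<le> c * packing_outer dist \<Delta> h (A c)"
        by (intro mult_left_mono emeasure_pm_le) simp
      also have "\<dots> \<le> nus \<Delta> ?Q (A c)" by (rule c_outer_le_nus[OF eta hq])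
      finally show ?thesis .
    qed
    have "integral\<^sup>S ?M s = (\<Sum>c\<in>s ` UNIV. c * emeasure ?M (A c))"
      unfolding simple_integral_def by (simp add: space_pm A_def)
    also have "\<dots> \<le> (\<Sum>c\<in>s ` UNIV. nus \<Delta> ?Q (A c))" by (intro sum_mono tm)
    also have "\<dots> = nus \<Delta> ?Q (\<Union>c\<in>s ` UNIV. A c)"
      by (rule nus_sum[OF fin]) (use AB[unfolded A_def] in \<open>auto simp: disjoint_family_on_def A_def\<close>)
    also have "\<dots> \<le> nus \<Delta> ?Q UNIV" by (rule nus_mono) simp
    also have "\<dots> \<le> nu0 \<Delta> ?Q UNIV" by (rule nus_le_nu0)
    also have "\<dots> \<le> pre_packing max_dist \<Delta> (\<lambda>r. g r * h r) E" by (rule nu0_le_pre[OF hg hh])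
    finally show "integral\<^sup>S ?M s \<le> pre_packing max_dist \<Delta> (\<lambda>r. g r * h r) E" .
  qed
qed

theorem lemma3p2:
  fixes E :: "('a::metric_space \<times> 'b::metric_space) set"
    and \<Delta> :: "real set" and g h :: "real \<Rightarrow> real"
  assumes "scale \<Delta>" and "hausdorff_function g" and "hausdorff_function h"
    and "compact E"
  shows "(\<lambda>x. lower_box0 dist g {y. (x, y) \<in> E}) \<in> borel_measurable borel \<and>
         (\<integral>\<^sup>+ x. lower_box0 dist g {y. (x, y) \<in> E} \<partial>(packing_measure \<Delta> h))
           \<le> pre_packing max_dist \<Delta> (\<lambda>r. g r * h r) E"
proof -
  let ?p = "\<lambda>n x. psi g (1 / real (Suc n)) {y. (x, y) \<in> E}"
  have eq: "(\<lambda>x. lower_box0 dist g {y. (x, y) \<in> E}) = (\<lambda>x. SUP n. ?p n x)"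
    by (simp add: lb_SUP)
  have pm: "?p n \<in> borel_measurable borel" for n by (rule psi_meas[OF assms(2,4)])
  have meas: "(\<lambda>x. lower_box0 dist g {y. (x, y) \<in> E}) \<in> borel_measurable borel"
    unfolding eq by (rule borel_measurable_SUP[OF _ pm]) simp
  have pmM: "?p n \<in> borel_measurable (packing_measure \<Delta> h)" for n
    by (subst measurable_cong_sets[OF sets_pm refl]) (rule pm)
  have inc: "incseq ?p"
    by (intro incseq_SucI le_funI psi_mono) (simp add: frac_le)
  have "(\<integral>\<^sup>+ x. lower_box0 dist g {y. (x, y) \<in> E} \<partial>(packing_measure \<Delta> h))
      = (SUP n. integral\<^sup>N (packing_measure \<Delta> h) (?p n))"
    unfolding eq by (rule nn_integral_monotone_convergence_SUP[OF inc pmM])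
  also have "\<dots> \<le> pre_packing max_dist \<Delta> (\<lambda>r. g r * h r) E"
    by (intro SUP_least int_psi_le assms) simp
  finally show ?thesis using meas by simp
qed

end
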